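(* Let $N\ge 1$, let $L\in\mathbb{R}^{N\times N}$ be invertible and set $C=LL^T$. Let $D$ be the diagonal matrix with $D_{ii}=\sqrt{C_{ii}}$ (the standard deviations of $X\sim\mathcal N(0,C)$). Suppose $C$ is diagonally dominant in the sense that there is $\delta<1$ with $\sum_{j\neq i}|C_{ij}/C_{ii}|\le\delta$ for every $i$. Then $$\kappa(D^{-1}L)\le N^{1/4}\sqrt{\frac{1+\delta}{1-\delta}}.$$
   Context: For an invertible matrix $B\in\mathbb{R}^{N\times N}$, the condition number is $\kappa(B):=\|B\|_2\,\|B^{-1}\|_{S^4}$, where $\|\cdot\|_2$ is the spectral norm (largest singular value) and $\|A\|_{S^4}:=\left(\sum_{n=1}^N s_n^4\right)^{1/4}$ is the fourth Schatten norm, $s_1,\dots,s_N$ being the singular values of $A$. *)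

theory Defs
  imports "HOL-Analysis.Analysis"
begin

definition diag_mat :: "real^'n \<Rightarrow> real^'n^'n" where
  "diag_mat s = (\<chi> i j. if i = j then s $ i else 0)"

definition singular_values :: "real^'n^'n \<Rightarrow> real^'n" where
  "singular_values A = (SOME s. (\<forall>i. s $ i \<ge> 0) \<and>
     (\<exists>U V. orthogonal_matrix U \<and> orthogonal_matrix V \<and>
            A = U ** diag_mat s ** transpose V))"

definition spec_norm :: "real^'n^'n \<Rightarrow> real" where
  "spec_norm A = Max (range (\<lambda>i. singular_values A $ i))"

definition schatten4 :: "real^'n^'n \<Rightarrow> real" where
  "schatten4 A = (\<Sum>i\<in>UNIV. (singular_values A $ i) ^ 4) powr (1/4)"

definition kappa :: "real^'n^'n \<Rightarrow> real" where
  "kappa B = spec_norm B * schatten4 (matrix_inv B)"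

end

theory Submission
  imports Defs
begin

lemma sym_inner:
  fixes A :: "real^'n^'n"
  assumes "transpose A = A"
  shows "(A *v x) \<bullet> y = x \<bullet> (A *v y)"
  by (metis assms dot_lmul_matrix transpose_matrix_vector)

lemma quad_nonneg_zero:
  fixes b q :: real
  assumes "\<forall>t. 0 \<le> 2*t*b + t^2*q" "q \<ge> 0"
  shows "b = 0"
proof -
  have "0 \<le> 2*(-b/(q+1))*b + (-b/(q+1))^2*q" using assms(1) by blast
  hence "0 \<le> (2*(-b/(q+1))*b + (-b/(q+1))^2*q) * (q+1)^2" using assms(2) by simp
  also have "\<dots> = -(b^2 * (q+2))"
  proof -
    have "q + 1 \<noteq> 0" using assms(2) by simp
    thus ?thesis by (simp add: power2_eq_square divide_simps) (simp add: algebra_simps)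
  qed
  finally have "b^2 * (q+2) \<le> 0" by simp
  moreover have "q + 2 > 0" using assms(2) by simp
  ultimately have "b^2 \<le> 0" by (simp add: mult_le_0_iff)
  thus ?thesis by simp
qed

lemma eig_in_subspace:
  fixes A :: "real^'n^'n"
  assumes sym: "transpose A = A" and S: "subspace S" and inv: "\<forall>x\<in>S. A *v x \<in> S"
    and ne: "\<not> S \<subseteq> {0}"
  shows "\<exists>x \<mu>. x \<in> S \<and> norm x = 1 \<and> A *v x = \<mu> *\<^sub>R x"
proof -
  let ?K = "S \<inter> sphere 0 1"
  have cK: "compact ?K" using closed_subspace[OF S] by (simp add: closed_Int_compact)
  obtain y where y: "y \<in> S" "y \<noteq> 0" using ne by auto
  have "y /\<^sub>R norm y \<in> ?K" using y S by (simp add: subspace_scale)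
  hence neK: "?K \<noteq> {}" by blast
  have cont: "continuous_on ?K (\<lambda>x. x \<bullet> (A *v x))"
    by (intro continuous_intros linear_continuous_on matrix_vector_mul_bounded_linear)
  obtain x where x: "x \<in> ?K" and xmax: "\<forall>z\<in>?K. z \<bullet> (A *v z) \<le> x \<bullet> (A *v x)"
    using continuous_attains_sup[OF cK neK cont] by blast
  define \<mu> where "\<mu> = x \<bullet> (A *v x)"
  have xS: "x \<in> S" and nx: "norm x = 1" using x by auto
  have xx: "x \<bullet> x = 1" using nx by (simp add: norm_eq_1)
  have Q: "z \<bullet> (A *v z) \<le> \<mu> * (z \<bullet> z)" if zS: "z \<in> S" for z
  proof (cases "z = 0")
    case True thus ?thesis by simp
  next
    case False
    let ?n = "norm z"
    have "z /\<^sub>R ?n \<in> ?K" using zS False S by (simp add: subspace_scale)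
    hence "(z /\<^sub>R ?n) \<bullet> (A *v (z /\<^sub>R ?n)) \<le> \<mu>" using xmax \<mu>_def by blast
    hence "(z \<bullet> (A *v z)) / ?n^2 \<le> \<mu>"
      by (simp add: matrix_vector_mult_scaleR power2_eq_square divide_simps)
    hence "z \<bullet> (A *v z) \<le> \<mu> * ?n^2" using False by (simp add: divide_simps)
    thus ?thesis by (simp add: power2_norm_eq_inner)
  qed
  define r where "r = \<mu> *\<^sub>R x - A *v x"
  have rS: "r \<in> S" unfolding r_def using S xS inv by (simp add: subspace_diff subspace_scale)
  have orth: "r \<bullet> y = 0" if yS: "y \<in> S" for y
  proof -
    define b where "b = r \<bullet> y"
    define q where "q = \<mu> * (y \<bullet> y) - y \<bullet> (A *v y)"
    have q0: "q \<ge> 0" using Q[OF yS] q_def by simp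
    have "0 \<le> 2*t*b + t^2*q" for t
    proof -
      let ?z = "x + t *\<^sub>R y"
      have zS: "?z \<in> S" using S xS yS by (simp add: subspace_add subspace_scale)
      have s: "x \<bullet> (A *v y) = y \<bullet> (A *v x)" using sym_inner[OF sym, of y x] by (simp add: inner_commute)
      have "?z \<bullet> (A *v ?z) = x \<bullet> (A *v x) + 2*t*(y \<bullet> (A *v x)) + t^2 * (y \<bullet> (A *v y))"
        using s by (simp add: matrix_vector_right_distrib matrix_vector_mult_scaleR inner_add_left inner_add_right power2_eq_square inner_commute algebra_simps)
      moreover have "?z \<bullet> ?z = 1 + 2*t*(x \<bullet> y) + t^2*(y \<bullet> y)"
        using xx by (simp add: inner_add_left inner_add_right power2_eq_square inner_commute algebra_simps)
      moreover have b_eq: "b = \<mu> * (x \<bullet> y) - y \<bullet> (A *v x)" unfolding b_def r_def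
        by (simp add: inner_diff_left inner_commute[of y x] inner_commute[of "A *v x" y])
      ultimately have "\<mu> + 2*t*(y \<bullet> (A *v x)) + t^2 * (y \<bullet> (A *v y)) \<le> \<mu> * (1 + 2*t*(x \<bullet> y) + t^2*(y \<bullet> y))"
        using Q[OF zS] \<mu>_def by simp
      moreover have "2*t*b + t^2*q = \<mu> * (1 + 2*t*(x \<bullet> y) + t^2*(y \<bullet> y)) - (\<mu> + 2*t*(y \<bullet> (A *v x)) + t^2 * (y \<bullet> (A *v y)))"
        unfolding b_eq q_def by (simp add: algebra_simps)
      ultimately show ?thesis by linarith
    qed
    thus ?thesis using quad_nonneg_zero q0 b_def by blast
  qed
  have "r = 0" using orth[OF rS] by simp
  hence "A *v x = \<mu> *\<^sub>R x" unfolding r_def by simp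
  thus ?thesis using xS nx by blast
qed

lemma eigbasis_subspace:
  fixes A :: "real^'n^'n"
  assumes sym: "transpose A = A"
  shows "subspace S \<Longrightarrow> (\<forall>x\<in>S. A *v x \<in> S) \<Longrightarrow> dim S = n \<Longrightarrow>
    \<exists>E. finite E \<and> E \<subseteq> S \<and> pairwise orthogonal E \<and>
        (\<forall>e\<in>E. norm e = 1 \<and> (\<exists>\<mu>. A *v e = \<mu> *\<^sub>R e)) \<and> card E = n"
proof (induction n arbitrary: S)
  case 0
  show ?case by (rule exI[of _ "{}"]) auto
next
  case (Suc n)
  have "\<not> S \<subseteq> {0}" using Suc.prems(3) dim_eq_0 by (metis nat.distinct(1))
  then obtain x \<mu> where x: "x \<in> S" "norm x = 1" "A *v x = \<mu> *\<^sub>R x"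
    using eig_in_subspace[OF sym Suc.prems(1,2)] by blast
  have xx: "x \<bullet> x = 1" using x(2) by (simp add: norm_eq_1)
  define S' where "S' = {y \<in> S. \<forall>z \<in> span {x}. orthogonal z y}"
  have S'eq: "S' = {y \<in> S. x \<bullet> y = 0}"
    unfolding S'_def span_singleton orthogonal_def by auto
  have "dim S' + dim (span {x}) = dim S"
    unfolding S'_def by (rule dim_subspace_orthogonal_to_vectors)
      (auto simp: Suc.prems(1) x(1) span_minimal)
  moreover have "dim (span {x}) = 1" using x(2) by auto
  ultimately have dS': "dim S' = n" using Suc.prems(3) by simp
  have sS': "subspace S'" unfolding S'eq subspace_def
    using Suc.prems(1) by (auto simp: subspace_0 subspace_add subspace_scale inner_add_right)
  have iS': "\<forall>y\<in>S'. A *v y \<in> S'"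
  proof
    fix y assume "y \<in> S'"
    hence y: "y \<in> S" "x \<bullet> y = 0" unfolding S'eq by auto
    have "x \<bullet> (A *v y) = (A *v x) \<bullet> y" using sym_inner[OF sym] by simp
    also have "\<dots> = 0" using x(3) y(2) by simp
    finally show "A *v y \<in> S'" unfolding S'eq using y Suc.prems(2) by auto
  qed
  obtain E' where E': "finite E'" "E' \<subseteq> S'" "pairwise orthogonal E'"
     "\<forall>e\<in>E'. norm e = 1 \<and> (\<exists>\<mu>. A *v e = \<mu> *\<^sub>R e)" "card E' = n"
    using Suc.IH[OF sS' iS' dS'] by blast
  have xE': "x \<notin> E'" using E'(2) xx unfolding S'eq by auto
  show ?case
  proof (rule exI[of _ "insert x E'"], intro conjI)
    show "finite (insert x E')" using E'(1) by simp
    show "insert x E' \<subseteq> S" using E'(2) x(1) unfolding S'eq by auto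
    show "pairwise orthogonal (insert x E')" using E'(2,3) unfolding S'eq pairwise_insert
      by (auto simp: orthogonal_def inner_commute)
    show "\<forall>e\<in>insert x E'. norm e = 1 \<and> (\<exists>\<mu>. A *v e = \<mu> *\<^sub>R e)" using E'(4) x by auto
    show "card (insert x E') = Suc n" using E'(1,5) xE' by simp
  qed
qed

lemma spectral:
  fixes A :: "real^'n^'n"
  assumes sym: "transpose A = A"
  shows "\<exists>U lam. orthogonal_matrix U \<and> A ** U = U ** diag_mat lam"
proof -
  obtain E where E: "finite E" "pairwise orthogonal E"
     "\<forall>e\<in>E. norm e = 1 \<and> (\<exists>\<mu>. A *v e = \<mu> *\<^sub>R e)" "card E = CARD('n)"
    using eigbasis_subspace[OF sym, of UNIV "dim (UNIV :: (real^'n) set)"] by auto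
  obtain h where h: "bij_betw h (UNIV :: 'n set) E"
    using finite_same_card_bij[of "UNIV :: 'n set" E] E(1,4) by auto
  define U :: "real^'n^'n" where "U = (\<chi> i j. h j $ i)"
  define lam :: "real^'n" where "lam = (\<chi> j. SOME \<mu>. A *v h j = \<mu> *\<^sub>R h j)"
  have hE: "h j \<in> E" for j using h bij_betwE by blast
  have hinj: "h i = h j \<Longrightarrow> i = j" for i j using h bij_betw_imp_inj_on injD by metis
  have lamj: "A *v h j = lam $ j *\<^sub>R h j" for j
  proof -
    have "\<exists>\<mu>. A *v h j = \<mu> *\<^sub>R h j" using E(3) hE by blast
    hence "A *v h j = (SOME \<mu>. A *v h j = \<mu> *\<^sub>R h j) *\<^sub>R h j" by (rule someI_ex)
    thus ?thesis unfolding lam_def by simp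
  qed
  have inn: "h i \<bullet> h j = (if i = j then 1 else 0)" for i j
  proof (cases "i = j")
    case True thus ?thesis using E(3) hE by (simp add: norm_eq_1)
  next
    case False
    hence "h i \<noteq> h j" using hinj by blast
    thus ?thesis using E(2) hE False unfolding pairwise_def orthogonal_def by auto
  qed
  have "transpose U ** U = mat 1"
    unfolding vec_eq_iff matrix_matrix_mult_def transpose_def U_def mat_def
    using inn by (simp add: inner_vec_def)
  hence "orthogonal_matrix U" by (simp add: orthogonal_matrix)
  moreover have "A ** U = U ** diag_mat lam"
  proof -
    have "(A *v h j) $ i = lam $ j * h j $ i" for i j using lamj by simp
    thus ?thesis
      unfolding vec_eq_iff matrix_matrix_mult_def U_def diag_mat_def
      by (simp add: matrix_vector_mult_def if_distrib cong: if_cong)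
  qed
  ultimately show ?thesis by blast
qed

lemma minv:
  fixes A :: "real^'n^'n"
  assumes "invertible A"
  shows "A ** matrix_inv A = mat 1 \<and> matrix_inv A ** A = mat 1"
  using assms unfolding invertible_def matrix_inv_def by (rule someI_ex)

lemma minv_unique:
  fixes A B :: "real^'n^'n"
  assumes "A ** B = mat 1" "B ** A = mat 1"
  shows "matrix_inv A = B"
  unfolding matrix_inv_def
proof (rule some_equality)
  show "A ** B = mat 1 \<and> B ** A = mat 1" using assms by simp
  fix A' :: "real^'n^'n" assume "A ** A' = mat 1 \<and> A' ** A = mat 1"
  hence "A' = A' ** (A ** B)" "A' ** A = mat 1" using assms by auto
  thus "A' = B" by (simp add: matrix_mul_assoc)
qed

lemma ite0_mult: "(if P then x else 0) * (y::real) = (if P then x * y else 0)" by simp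
lemma mult_ite0: "(y::real) * (if P then x else 0) = (if P then y * x else 0)" by simp

lemma diag_mult: "diag_mat a ** diag_mat b = diag_mat (\<chi> i. a$i * b$i)"
  unfolding diag_mat_def matrix_matrix_mult_def vec_eq_iff
  by (simp add: ite0_mult mult_ite0 sum.delta)

lemma transpose_diag: "transpose (diag_mat a) = diag_mat a"
  unfolding diag_mat_def transpose_def vec_eq_iff by auto

lemma diag_one: "diag_mat (\<chi> i. 1) = mat 1"
  unfolding diag_mat_def mat_def vec_eq_iff by auto

lemma diag_axis: "diag_mat a *v axis i 1 = a$i *\<^sub>R axis i (1::real)"
  unfolding diag_mat_def matrix_vector_mult_def vec_eq_iff axis_def
  by (simp add: ite0_mult mult_ite0 sum.delta)

lemma eigen_from_diag:
  fixes X U :: "real^'n^'n"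
  assumes U: "orthogonal_matrix U" and XU: "X ** U = U ** diag_mat d"
  shows "\<exists>v. v \<noteq> 0 \<and> X *v v = d$i *\<^sub>R v"
proof -
  define v where "v = U *v axis i (1::real)"
  have "X *v v = (X ** U) *v axis i 1" unfolding v_def by (simp add: matrix_vector_mul_assoc)
  also have "\<dots> = U *v (diag_mat d *v axis i 1)" unfolding XU by (simp add: matrix_vector_mul_assoc)
  also have "\<dots> = d$i *\<^sub>R v" unfolding diag_axis v_def by (simp add: matrix_vector_mult_scaleR)
  finally have 1: "X *v v = d$i *\<^sub>R v" .
  have "transpose U *v v = axis i 1"
    unfolding v_def matrix_vector_mul_assoc using U by (simp add: orthogonal_matrix)
  hence "v \<noteq> 0" by (metis axis_eq_0_iff matrix_vector_mult_0_right zero_neq_one)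
  thus ?thesis using 1 by blast
qed

lemma svd_invertible:
  fixes M :: "real^'n^'n"
  assumes "invertible M"
  shows "\<exists>s. (\<forall>i. s $ i \<ge> 0) \<and> (\<exists>U V. orthogonal_matrix U \<and> orthogonal_matrix V \<and>
            M = U ** diag_mat s ** transpose V)"
proof -
  have "transpose (transpose M ** M) = transpose M ** M" by (simp add: matrix_transpose_mul)
  then obtain V lam where V: "orthogonal_matrix V" and GV: "(transpose M ** M) ** V = V ** diag_mat lam"
    using spectral by blast
  define W where "W = M ** V"
  have VtV: "transpose V ** V = mat 1" and VVt: "V ** transpose V = mat 1"
    using V unfolding orthogonal_matrix_def by auto
  have WW: "transpose W ** W = diag_mat lam"
  proof -
    have "transpose W ** W = transpose V ** ((transpose M ** M) ** V)"
      unfolding W_def by (simp add: matrix_transpose_mul matrix_mul_assoc)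
    also have "\<dots> = diag_mat lam" unfolding GV by (simp add: matrix_mul_assoc VtV)
    finally show ?thesis .
  qed
  have "invertible V" unfolding invertible_def using VtV VVt by blast
  hence Winv: "invertible W" unfolding W_def using assms by (simp add: invertible_mult)
  have lampos: "lam $ j > 0" for j
  proof -
    let ?e = "axis j (1::real)"
    have "(W *v ?e) \<bullet> (W *v ?e) = (?e v* transpose W) \<bullet> (W *v ?e)" by simp
    also have "\<dots> = ?e \<bullet> (transpose W *v (W *v ?e))" by (rule dot_lmul_matrix)
    also have "\<dots> = ?e \<bullet> ((transpose W ** W) *v ?e)" by (simp only: matrix_vector_mul_assoc)
    also have "\<dots> = lam $ j" unfolding WW diag_axis by (simp add: inner_axis_axis)
    finally have eq: "(W *v ?e) \<bullet> (W *v ?e) = lam $ j" .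
    have "W *v ?e \<noteq> 0"
    proof
      assume "W *v ?e = 0"
      hence "W *v ?e = W *v 0" by simp
      hence "?e = 0" by (rule injD[OF inj_matrix_vector_mult[OF Winv]])
      thus False by simp
    qed
    hence "0 < (W *v ?e) \<bullet> (W *v ?e)" by simp
    thus ?thesis using eq by simp
  qed
  define s where "s = (\<chi> i. sqrt (lam $ i))"
  define si where "si = (\<chi> i. 1 / sqrt (lam $ i))"
  define U where "U = W ** diag_mat si"
  have "transpose U ** U = diag_mat si ** (transpose W ** W) ** diag_mat si"
    unfolding U_def by (simp add: matrix_transpose_mul transpose_diag matrix_mul_assoc)
  also have "\<dots> = mat 1" unfolding WW diag_mult si_def
    unfolding diag_one[symmetric] apply (rule arg_cong[where f=diag_mat])
    using lampos by (simp add: vec_eq_iff field_simps less_imp_neq[symmetric] abs_of_pos)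
  finally have U: "orthogonal_matrix U" by (simp add: orthogonal_matrix)
  have "U ** diag_mat s ** transpose V = W ** (diag_mat si ** diag_mat s) ** transpose V"
    unfolding U_def by (simp add: matrix_mul_assoc)
  also have "diag_mat si ** diag_mat s = mat 1" unfolding diag_mult si_def s_def
    unfolding diag_one[symmetric] apply (rule arg_cong[where f=diag_mat])
    using lampos by (simp add: vec_eq_iff field_simps less_imp_neq[symmetric] abs_of_pos)
  also have "W ** mat 1 ** transpose V = M" unfolding W_def
    by (simp add: matrix_mul_assoc[symmetric] VVt)
  finally have "M = U ** diag_mat s ** transpose V" by simp
  moreover have "\<forall>i. s $ i \<ge> 0" unfolding s_def using lampos by (simp add: less_imp_le)
  ultimately show ?thesis using U V by blast
qed

lemma diag_vec: "(diag_mat a *v x) $ i = a $ i * x $ (i::'n::finite)"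
  unfolding diag_mat_def matrix_vector_mult_def by (simp add: ite0_mult sum.delta)

lemma gram_from_svd:
  fixes M U V :: "real^'n^'n"
  assumes U: "orthogonal_matrix U" and V: "orthogonal_matrix V"
    and M: "M = U ** diag_mat s ** transpose V"
  shows "(M ** transpose M) ** U = U ** diag_mat (\<chi> i. s$i * s$i)"
    and "(transpose M ** M) ** V = V ** diag_mat (\<chi> i. s$i * s$i)"
proof -
  have UtU: "transpose U ** U = mat 1" and VtV: "transpose V ** V = mat 1"
    using U V unfolding orthogonal_matrix_def by auto
  have "(M ** transpose M) ** U = U ** diag_mat s ** (transpose V ** V) ** diag_mat s ** (transpose U ** U)"
    unfolding M by (simp add: matrix_transpose_mul transpose_diag matrix_mul_assoc)
  also have "\<dots> = U ** (diag_mat s ** diag_mat s)" by (simp add: UtU VtV matrix_mul_assoc)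
  finally show "(M ** transpose M) ** U = U ** diag_mat (\<chi> i. s$i * s$i)" by (simp add: diag_mult)
  have "(transpose M ** M) ** V = V ** diag_mat s ** (transpose U ** U) ** diag_mat s ** (transpose V ** V)"
    unfolding M by (simp add: matrix_transpose_mul transpose_diag matrix_mul_assoc)
  also have "\<dots> = V ** (diag_mat s ** diag_mat s)" by (simp add: UtU VtV matrix_mul_assoc)
  finally show "(transpose M ** M) ** V = V ** diag_mat (\<chi> i. s$i * s$i)" by (simp add: diag_mult)
qed

lemma gersh:
  fixes C :: "real^'n^'n" and w :: "real^'n"
  assumes w: "w \<noteq> 0" and cpos: "\<forall>i. C$i$i > 0"
    and dom: "\<forall>i. (\<Sum>j\<in>UNIV - {i}. \<bar>C$i$j / C$i$i\<bar>) \<le> \<delta>"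
    and eig: "\<forall>i. (C *v w)$i = lam * C$i$i * w$i"
  shows "\<bar>lam - 1\<bar> \<le> \<delta>"
proof -
  have fin: "finite (range (\<lambda>j. \<bar>w$j\<bar>))" by simp
  obtain i where i: "\<bar>w$i\<bar> = Max (range (\<lambda>j. \<bar>w$j\<bar>))"
  proof -
    have "Max (range (\<lambda>j. \<bar>w$j\<bar>)) \<in> range (\<lambda>j. \<bar>w$j\<bar>)" by (rule Max_in[OF fin]) simp
    then show ?thesis by (rule imageE) (rule that, simp)
  qed
  have imax: "\<bar>w$j\<bar> \<le> \<bar>w$i\<bar>" for j using i Max_ge[OF fin] by auto
  obtain k where "w$k \<noteq> 0" using w by (auto simp: vec_eq_iff)
  hence wi: "\<bar>w$i\<bar> > 0" using imax[of k] by linarith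
  have ci: "C$i$i > 0" using cpos by blast
  have "(C *v w)$i = C$i$i * w$i + (\<Sum>j\<in>UNIV - {i}. C$i$j * w$j)"
    unfolding matrix_vector_mult_def by (simp add: sum.remove[of UNIV i])
  hence "(lam - 1) * C$i$i * w$i = (\<Sum>j\<in>UNIV - {i}. C$i$j * w$j)" using eig
    by (simp add: algebra_simps)
  hence "\<bar>(lam - 1) * C$i$i * w$i\<bar> = \<bar>\<Sum>j\<in>UNIV - {i}. C$i$j * w$j\<bar>" by simp
  hence "\<bar>lam - 1\<bar> * C$i$i * \<bar>w$i\<bar> = \<bar>\<Sum>j\<in>UNIV - {i}. C$i$j * w$j\<bar>"
    using ci by (simp add: abs_mult)
  also have "\<dots> \<le> (\<Sum>j\<in>UNIV - {i}. \<bar>C$i$j\<bar> * \<bar>w$j\<bar>)"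
    by (rule order_trans[OF sum_abs]) (simp add: abs_mult)
  also have "\<dots> \<le> (\<Sum>j\<in>UNIV - {i}. \<bar>C$i$j\<bar> * \<bar>w$i\<bar>)"
    by (rule sum_mono) (simp add: imax mult_left_mono)
  also have "\<dots> = C$i$i * \<bar>w$i\<bar> * (\<Sum>j\<in>UNIV - {i}. \<bar>C$i$j / C$i$i\<bar>)"
    using ci by (simp add: sum_distrib_left sum_distrib_right abs_div mult.commute)
  also have "\<dots> \<le> C$i$i * \<bar>w$i\<bar> * \<delta>"
  proof -
    have di: "(\<Sum>j\<in>UNIV - {i}. \<bar>C$i$j / C$i$i\<bar>) \<le> \<delta>" using dom by blast
    show ?thesis by (rule mult_left_mono[OF di]) (use ci wi in simp)
  qed
  finally have "(C$i$i * \<bar>w$i\<bar>) * \<bar>lam - 1\<bar> \<le> (C$i$i * \<bar>w$i\<bar>) * \<delta>"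
    by (simp add: algebra_simps)
  moreover have "C$i$i * \<bar>w$i\<bar> > 0" using ci wi by simp
  ultimately show ?thesis using mult_le_cancel_left_pos by blast
qed

lemma sq_powr_quarter:
  fixes a :: real assumes "a > 0"
  shows "(a^2) powr (1/4) = sqrt a"
proof -
  have "(a^2) powr (1/4) = (a powr 2) powr (1/4)" using assms by (simp add: powr_numeral)
  also have "\<dots> = a powr (1/2)" by (simp add: powr_powr)
  also have "\<dots> = sqrt a" using assms by (simp add: powr_half_sqrt)
  finally show ?thesis .
qed

theorem proposition1:
  fixes L :: "real^'n^'n" and \<delta> :: real
  assumes "invertible L"
    and "\<delta> < 1"
    and "\<forall>i. (\<Sum>j\<in>UNIV - {i}.
           \<bar>(L ** transpose L) $ i $ j / (L ** transpose L) $ i $ i\<bar>) \<le> \<delta>"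
  shows "kappa (matrix_inv (diag_mat (\<chi> i. sqrt ((L ** transpose L) $ i $ i))) ** L)
           \<le> real CARD('n) powr (1/4) * sqrt ((1 + \<delta>) / (1 - \<delta>))"
proof -
  define C where "C = L ** transpose L"
  define d :: "real^'n" where "d = (\<chi> i. sqrt (C$i$i))"
  define Dm where "Dm = diag_mat d"
  define Di :: "real^'n^'n" where "Di = diag_mat (\<chi> i. 1 / d$i)"
  define B where "B = matrix_inv Dm ** L"
  have dom: "\<forall>i. (\<Sum>j\<in>UNIV - {i}. \<bar>C $ i $ j / C $ i $ i\<bar>) \<le> \<delta>"
    using assms(3) unfolding C_def .
  have Linv: "L ** matrix_inv L = mat 1" using minv[OF assms(1)] by blast
  have cpos: "\<forall>i. C$i$i > 0"
  proof
    fix i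
    have ceq: "C$i$i = (\<Sum>k\<in>UNIV. L$i$k * L$i$k)"
      unfolding C_def matrix_matrix_mult_def transpose_def by simp
    hence ge: "C$i$i \<ge> 0" by (simp add: sum_nonneg)
    show "C$i$i > 0"
    proof (rule ccontr)
      assume "\<not> C$i$i > 0"
      hence "(\<Sum>k\<in>UNIV. L$i$k * L$i$k) = 0" using ge ceq by simp
      hence "\<forall>k\<in>UNIV. L$i$k * L$i$k = 0" by (subst (asm) sum_nonneg_eq_0_iff) auto
      hence "\<forall>k. L$i$k = 0" by simp
      hence "(L ** matrix_inv L)$i$i = 0" unfolding matrix_matrix_mult_def by simp
      thus False using Linv by (simp add: mat_def)
    qed
  qed
  have dpos: "d$i > 0" for i using cpos unfolding d_def by simp
  have dd: "d$i * d$i = C$i$i" for i using cpos unfolding d_def by (simp add: less_imp_le)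
  have DmDi: "Dm ** Di = mat 1" "Di ** Dm = mat 1"
    unfolding Dm_def Di_def diag_mult diag_one[symmetric]
    by (rule arg_cong[where f=diag_mat], use dpos in \<open>simp add: vec_eq_iff less_imp_neq[symmetric]\<close>)+
  hence invDm: "matrix_inv Dm = Di" by (rule minv_unique)
  have "invertible Di" unfolding invertible_def using DmDi by blast
  hence Binv: "invertible B" unfolding B_def invDm using assms(1) by (simp add: invertible_mult)
  have Dit: "transpose Di = Di" unfolding Di_def by (rule transpose_diag)
  define R where "R = B ** transpose B"
  have R_eq: "R = Di ** C ** Di" unfolding R_def B_def invDm C_def
    by (simp add: matrix_transpose_mul Dit matrix_mul_assoc)
  have d0: "\<delta> \<ge> 0"
  proof -
    obtain i :: 'n where True by simp
    have "0 \<le> (\<Sum>j\<in>UNIV - {i}. \<bar>C $ i $ j / C $ i $ i\<bar>)" by (simp add: sum_nonneg)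
    thus ?thesis using dom by (meson order_trans)
  qed
  have Reig: "\<bar>lam - 1\<bar> \<le> \<delta>" if v: "v \<noteq> 0" and ev: "R *v v = lam *\<^sub>R v" for v lam
  proof -
    define w where "w = Di *v v"
    have vw: "v = Dm *v w" unfolding w_def by (simp add: matrix_vector_mul_assoc DmDi)
    hence wne: "w \<noteq> 0" using v by auto
    have "C *v w = Dm *v (R *v v)" unfolding R_eq w_def
      by (simp add: matrix_vector_mul_assoc matrix_mul_assoc DmDi)
    also have "\<dots> = lam *\<^sub>R (Dm *v v)" by (simp add: ev matrix_vector_mult_scaleR)
    finally have Cw: "C *v w = lam *\<^sub>R (Dm *v (Dm *v w))" using vw by simp
    have "\<forall>i. (C *v w)$i = lam * C$i$i * w$i"
    proof
      fix i
      have "(C *v w)$i = lam * (d$i * (d$i * w$i))" unfolding Cw Dm_def by (simp add: diag_vec)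
      thus "(C *v w)$i = lam * C$i$i * w$i" using dd[of i] by (simp add: algebra_simps)
    qed
    thus ?thesis using gersh[OF wne cpos dom] by blast
  qed
  define s where "s = singular_values B"
  have "(\<forall>i. s $ i \<ge> 0) \<and> (\<exists>U V. orthogonal_matrix U \<and> orthogonal_matrix V \<and>
            B = U ** diag_mat s ** transpose V)"
    unfolding s_def singular_values_def by (rule someI_ex[OF svd_invertible[OF Binv]])
  then obtain U V where s0: "\<forall>i. s $ i \<ge> 0" and U: "orthogonal_matrix U" and V: "orthogonal_matrix V"
    and Bd: "B = U ** diag_mat s ** transpose V" by blast
  have sb: "s$i \<le> sqrt (1 + \<delta>)" for i
  proof -
    obtain v where v: "v \<noteq> 0" "R *v v = (s$i * s$i) *\<^sub>R v"
      using eigen_from_diag[OF U gram_from_svd(1)[OF U V Bd], of i] unfolding R_def by auto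
    have "\<bar>s$i * s$i - 1\<bar> \<le> \<delta>" by (rule Reig[OF v])
    hence "(s$i)^2 \<le> 1 + \<delta>" by (simp add: power2_eq_square)
    thus ?thesis by (rule real_le_rsqrt)
  qed
  define Bi where "Bi = matrix_inv B"
  have BBi: "B ** Bi = mat 1" "Bi ** B = mat 1" using minv[OF Binv] unfolding Bi_def by auto
  hence Biinv: "invertible Bi" unfolding invertible_def by blast
  define t where "t = singular_values Bi"
  have "(\<forall>i. t $ i \<ge> 0) \<and> (\<exists>U V. orthogonal_matrix U \<and> orthogonal_matrix V \<and>
            Bi = U ** diag_mat t ** transpose V)"
    unfolding t_def singular_values_def by (rule someI_ex[OF svd_invertible[OF Biinv]])
  then obtain U' V' where t0: "\<forall>i. t $ i \<ge> 0" and U': "orthogonal_matrix U'" and V': "orthogonal_matrix V'"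
    and Bid: "Bi = U' ** diag_mat t ** transpose V'" by blast
  define X where "X = transpose Bi ** Bi"
  have "transpose B ** transpose Bi = mat 1"
    using BBi(2) by (metis matrix_transpose_mul transpose_mat)
  hence RX: "R ** X = mat 1" unfolding R_def X_def
    by (metis BBi(1) matrix_mul_assoc matrix_mul_rid)
  have tb: "t$i * t$i \<le> 1 / (1 - \<delta>)" for i
  proof -
    define q where "q = t$i * t$i"
    obtain v where v: "v \<noteq> 0" "X *v v = q *\<^sub>R v"
      using eigen_from_diag[OF V' gram_from_svd(2)[OF U' V' Bid], of i] unfolding X_def q_def by auto
    have "v = R *v (X *v v)" by (simp add: matrix_vector_mul_assoc RX)
    hence vq: "v = q *\<^sub>R (R *v v)" using v(2) by (simp add: matrix_vector_mult_scaleR)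
    hence q0: "q \<noteq> 0" using v(1) by auto
    have "q \<ge> 0" unfolding q_def by simp
    hence qp: "q > 0" using q0 by simp
    have "R *v v = (1/q) *\<^sub>R v" using vq q0 by (metis scaleR_scaleR eq_divide_eq_1 divide_self_if scaleR_one nonzero_divide_eq_eq)
    hence "\<bar>1/q - 1\<bar> \<le> \<delta>" by (rule Reig[OF v(1)])
    hence "1 - \<delta> \<le> 1/q" by linarith
    hence "(1 - \<delta>) * q \<le> 1" using qp by (simp add: field_simps)
    thus ?thesis unfolding q_def[symmetric] using assms(2) by (simp add: field_simps)
  qed
  have fin: "finite (range (\<lambda>i. s $ i))" by simp
  have spec: "spec_norm B \<le> sqrt (1 + \<delta>)"
    unfolding spec_norm_def s_def[symmetric] using fin sb by (simp add: Max_le_iff)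
  let ?N = "real CARD('n)"
  have pt: "(t $ i) ^ 4 \<le> (1 / (1 - \<delta>))^2" for i
  proof -
    have "(t $ i) ^ 4 = (t$i * t$i)^2" by (simp add: power2_eq_square power4_eq_xxxx)
    also have "\<dots> \<le> (1 / (1 - \<delta>))^2" using tb[of i] by (intro power_mono) simp_all
    finally show ?thesis .
  qed
  have "(\<Sum>i\<in>UNIV. (t $ i) ^ 4) \<le> ?N * (1 / (1 - \<delta>))^2"
    using sum_mono[of UNIV "\<lambda>i. (t$i)^4" "\<lambda>i. (1 / (1 - \<delta>))^2"] pt by simp
  hence "schatten4 Bi \<le> (?N * (1 / (1 - \<delta>))^2) powr (1/4)"
    unfolding schatten4_def t_def[symmetric] by (intro powr_mono2) (simp_all add: sum_nonneg)
  also have "\<dots> = ?N powr (1/4) * sqrt (1 / (1 - \<delta>))"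
    using assms(2) by (simp add: powr_mult sq_powr_quarter)
  finally have sch: "schatten4 Bi \<le> ?N powr (1/4) * sqrt (1 / (1 - \<delta>))" .
  have "kappa B \<le> sqrt (1 + \<delta>) * (?N powr (1/4) * sqrt (1 / (1 - \<delta>)))"
    unfolding kappa_def Bi_def[symmetric]
    by (rule mult_mono[OF spec sch]) (use d0 in \<open>simp_all add: schatten4_def\<close>)
  also have "\<dots> = ?N powr (1/4) * sqrt ((1 + \<delta>) / (1 - \<delta>))"
    by (simp add: real_sqrt_mult[symmetric] real_sqrt_divide)
  finally have "kappa B \<le> ?N powr (1/4) * sqrt ((1 + \<delta>) / (1 - \<delta>))" .
  moreover have "matrix_inv (diag_mat (\<chi> i. sqrt ((L ** transpose L) $ i $ i))) ** L = B"
    unfolding B_def Dm_def d_def C_def ..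
  ultimately show ?thesis by simp
qed

end
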